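(* Consider the threshold delay system (the "TDE model") described in the context and let $N_{T1}=f^{-1}(\lambda/\mu)$. Let $(\phi_1,\phi_2,\phi_3)^T\in D_{N_T}$ and let $(N,P,Z)^T:[0,\infty)\to\mathbb{R}^3$ be the solution of the corresponding initial value problem. If $N_T>N_{T1}$, then for any constant $\beta>N_T-N_{T1}$ there exists $t_1\ge t_0$ such that $P(t)<\beta$ for all $t\ge t_1$.
   Context: Standing assumptions: constants $\mu>\lambda>0$, $g>0$, $\gamma\in(0,1]$, $\delta>0$ with $\gamma g>\delta$, $\delta_0\ge 0$, $m>0$, $N_T>0$. The functions $f,h:[0,\infty)\to[0,\infty)$ are $C^1$ with $f(0)=0$, $f'>0$, $\lim_{N\to\infty}f(N)=1$ and $h(0)=0$, $h'>0$, $\lim_{P\to\infty}h(P)=1$. The function $R:[0,\infty)\to[0,\infty)$ is $C^1$ with $R\ge0$, $R'\ge0$, $R'(0)>0$ if $R(0)=0$, $\lim_{P\to\infty}R(P)=R_\infty<\infty$. For a function $P$ and $s\in[0,m]$, the delay $\tau(s,P_t)\ge0$ is defined implicitly by $\int_{-\tau(s,P_t)}^0 R(P(t+u))\,du=s$. TDE model, for $t\ge t_0$: $$N'(t)=-\mu P f(N)+\lambda P+\delta Z+(1-\gamma)gZh(P)+\delta_0(N_T-N-P-Z),$$ $$P'(t)=\mu P f(N)-\lambda P-gZh(P),$$ $$Z'(t)=R(P(t))e^{-\delta_0\tau(m,P_t)}\frac{\gamma g Z(t-\tau(m,P_t))h(P(t-\tau(m,P_t)))}{R(P(t-\tau(m,P_t)))}-\delta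 Z(t),$$ with initial conditions $N(t_0+t)=\phi_1(t)$, $P(t_0+t)=\phi_2(t)$, $Z(t_0+t)=\phi_3(t)$ for $t\in[-t_0,0]$. $D_{N_T}$ is the set of triples $(\phi_1,\phi_2,\phi_3)$ of continuous functions on $[-t_0,0]$ (some $t_0>0$) with $\phi_i>0$, $\int_{-t_0}^0R(\phi_2(u))\,du=m$, and $$N_T=\phi_1(0)+\phi_2(0)+\phi_3(0)+\int_0^m e^{-\delta_0\tau(s,\phi_2)}\frac{\gamma g\,\phi_3(-\tau(s,\phi_2))h(\phi_2(-\tau(s,\phi_2)))}{R(\phi_2(-\tau(s,\phi_2)))}\,ds,$$ where $\tau(s,\phi_2)\in[0,t_0]$ solves $\int_{-\tau(s,\phi_2)}^0R(\phi_2(u))\,du=s$. *)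

theory Defs
  imports "HOL-Analysis.Analysis"
begin

definition C1_nonneg :: "(real \<Rightarrow> real) \<Rightarrow> (real \<Rightarrow> real) \<Rightarrow> bool" where
  "C1_nonneg f f' \<longleftrightarrow>
     (\<forall>x\<ge>0. (f has_real_derivative f' x) (at x within {0..})) \<and> continuous_on {0..} f'"

text \<open>Implicitly defined delay: the \<tau> \<ge> 0 with t - \<tau> \<ge> lo and
  \<integral>_{t-\<tau>}^{t} R(p u) du = s, i.e. \<integral>_{-\<tau>}^0 R(p(t+u)) du = s.
  lo is the left end of the interval where p is defined.\<close>
definition delay :: "(real \<Rightarrow> real) \<Rightarrow> (real \<Rightarrow> real) \<Rightarrow> real \<Rightarrow> real \<Rightarrow> real \<Rightarrow> real" where
  "delay R p lo t s = (THE \<tau>. 0 \<le> \<tau> \<and> lo \<le> t - \<tau> \<and> integral {t - \<tau>..t} (\<lambda>u. R (p u)) = s)"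

definition D_NT ::
  "(real \<Rightarrow> real) \<Rightarrow> (real \<Rightarrow> real) \<Rightarrow> real \<Rightarrow> real \<Rightarrow> real \<Rightarrow> real \<Rightarrow> real \<Rightarrow> real
   \<Rightarrow> (real \<Rightarrow> real) \<Rightarrow> (real \<Rightarrow> real) \<Rightarrow> (real \<Rightarrow> real) \<Rightarrow> bool" where
  "D_NT R h \<gamma> g \<delta>0 m NT t0 \<phi>1 \<phi>2 \<phi>3 \<longleftrightarrow>
     t0 > 0 \<and>
     continuous_on {-t0..0} \<phi>1 \<and> continuous_on {-t0..0} \<phi>2 \<and> continuous_on {-t0..0} \<phi>3 \<and>
     (\<forall>u\<in>{-t0..0}. \<phi>1 u > 0 \<and> \<phi>2 u > 0 \<and> \<phi>3 u > 0) \<and>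
     integral {-t0..0} (\<lambda>u. R (\<phi>2 u)) = m \<and>
     NT = \<phi>1 0 + \<phi>2 0 + \<phi>3 0 +
       integral {0..m} (\<lambda>s. let \<tau> = delay R \<phi>2 (-t0) 0 s in
          exp (-\<delta>0 * \<tau>) * \<gamma> * g * \<phi>3 (-\<tau>) * h (\<phi>2 (-\<tau>)) / R (\<phi>2 (-\<tau>)))"

definition TDE_solution ::
  "real \<Rightarrow> real \<Rightarrow> real \<Rightarrow> real \<Rightarrow> real \<Rightarrow> real \<Rightarrow> real \<Rightarrow> real \<Rightarrow> real \<Rightarrow>
   (real \<Rightarrow> real) \<Rightarrow> (real \<Rightarrow> real) \<Rightarrow> (real \<Rightarrow> real) \<Rightarrow>
   (real \<Rightarrow> real) \<Rightarrow> (real \<Rightarrow> real) \<Rightarrow> (real \<Rightarrow> real) \<Rightarrow>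
   (real \<Rightarrow> real) \<Rightarrow> (real \<Rightarrow> real) \<Rightarrow> (real \<Rightarrow> real) \<Rightarrow> bool" where
  "TDE_solution \<mu> lam g \<gamma> \<delta> \<delta>0 m NT t0 f h R \<phi>1 \<phi>2 \<phi>3 N P Z \<longleftrightarrow>
     continuous_on {0..} N \<and> continuous_on {0..} P \<and> continuous_on {0..} Z \<and>
     (\<forall>t\<in>{-t0..0}. N (t0 + t) = \<phi>1 t \<and> P (t0 + t) = \<phi>2 t \<and> Z (t0 + t) = \<phi>3 t) \<and>
     (\<forall>t\<ge>t0.
        (N has_real_derivative
           (- \<mu> * P t * f (N t) + lam * P t + \<delta> * Z t + (1 - \<gamma>) * g * Z t * h (P t)
            + \<delta>0 * (NT - N t - P t - Z t))) (at t within {t0..}) \<and>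
        (P has_real_derivative
           (\<mu> * P t * f (N t) - lam * P t - g * Z t * h (P t))) (at t within {t0..}) \<and>
        (Z has_real_derivative
           (let \<tau> = delay R P 0 t m in
              R (P t) * exp (-\<delta>0 * \<tau>) * \<gamma> * g * Z (t - \<tau>) * h (P (t - \<tau>)) / R (P (t - \<tau>))
              - \<delta> * Z t)) (at t within {t0..}))"

end

theory Submission
  imports Defs
begin


lemma C1_cont: "C1_nonneg f f' \<Longrightarrow> continuous_on {0..} f"
  unfolding C1_nonneg_def by (intro DERIV_continuous_on) auto

lemma C1_at: "C1_nonneg f f' \<Longrightarrow> x > 0 \<Longrightarrow> (f has_real_derivative f' x) (at x)"
proof -
  assume a: "C1_nonneg f f'" "x > 0"
  then have "(f has_real_derivative f' x) (at x within {0..})" unfolding C1_nonneg_def by auto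
  moreover have "at x within {0..} = at x" using a by (intro at_within_interior) auto
  ultimately show ?thesis by simp
qed

lemma C1_mvt:
  assumes "C1_nonneg f f'" "0 \<le> x" "x < y"
  shows "\<exists>z. x < z \<and> z < y \<and> f y - f x = (y - x) * f' z"
proof -
  have "\<And>t. x \<le> t \<Longrightarrow> t \<le> y \<Longrightarrow> (f has_derivative (\<lambda>h. h * f' t)) (at t within {x..y})"
  proof -
    fix t assume t: "x \<le> t" "t \<le> y"
    have "(f has_real_derivative f' t) (at t within {0..})" using assms t unfolding C1_nonneg_def by auto
    then have "(f has_real_derivative f' t) (at t within {x..y})" by (rule DERIV_subset) (use assms in auto)
    then show "(f has_derivative (\<lambda>h. h * f' t)) (at t within {x..y})"
    proof -
      have e: "(\<lambda>h. h * f' t) = (*) (f' t)" by (auto simp: fun_eq_iff)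
      show ?thesis unfolding e using \<open>(f has_real_derivative f' t) (at t within {x..y})\<close>
        by (simp add: has_field_derivative_def)
    qed
  qed
  from mvt_simple[OF assms(3) this] show ?thesis by (auto simp: mult.commute)
qed

lemma C1_strict_mono:
  assumes "C1_nonneg f f'" "\<forall>x\<ge>0. f' x > 0" "0 \<le> x" "x < y"
  shows "f x < f y"
proof -
  obtain z where z: "x < z" "z < y" "f y - f x = (y - x) * f' z" using C1_mvt[OF assms(1,3,4)] by blast
  have "f' z > 0" using assms(2,3) z by auto
  then have "(y - x) * f' z > 0" using assms(4) by simp
  then show ?thesis using z by simp
qed

lemma C1_mono:
  assumes "C1_nonneg f f'" "\<forall>x\<ge>0. f' x \<ge> 0" "0 \<le> x" "x \<le> y"
  shows "f x \<le> f y"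
proof (cases "x = y")
  case False
  then show ?thesis
  proof -
    obtain z where z: "x < z" "z < y" "f y - f x = (y - x) * f' z" using C1_mvt[OF assms(1,3)] False assms(4) by force
    have "f' z \<ge> 0" using assms(2,3) z by auto
    then have "(y - x) * f' z \<ge> 0" using assms(4) by simp
    then show ?thesis using z by simp
  qed
qed simp

lemma cont_bound:
  fixes x :: "real \<Rightarrow> real"
  assumes "continuous_on {a..b} x"
  shows "\<exists>B. \<forall>t\<in>{a..b}. \<bar>x t\<bar> \<le> B"
proof -
  have "compact (x ` {a..b})" by (rule compact_continuous_image[OF assms compact_Icc])
  then have "bounded (x ` {a..b})" by (rule compact_imp_bounded)
  then show ?thesis unfolding bounded_iff by auto
qed

lemma lin_bound:
  assumes "C1_nonneg h h'" "h 0 = 0" "0 \<le> B"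
  shows "\<exists>C\<ge>0. \<forall>x\<in>{0..B}. h x \<le> C * x"
proof -
  have "continuous_on {0..B} h'" using assms(1) unfolding C1_nonneg_def
    by (meson continuous_on_subset atLeastatMost_subset_iff subsetI atLeastAtMost_iff atLeast_iff)
  then obtain C where C: "\<forall>t\<in>{0..B}. \<bar>h' t\<bar> \<le> C" using cont_bound by blast
  have "h x \<le> max C 0 * x" if xB: "x \<in> {0..B}" for x
  proof (cases "x = 0")
    case True then show ?thesis using assms by simp
  next
    case False
    then obtain z where z: "0 < z" "z < x" "h x - h 0 = (x - 0) * h' z"
    proof -
      have "0 < x" using xB False by auto
      then show ?thesis using C1_mvt[OF assms(1), of 0 x] that by auto
    qed
    have "z \<in> {0..B}" using z xB by auto
    then have "h' z \<le> max C 0" using C by (meson abs_le_D1 max.coboundedI1)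
    then have "x * h' z \<le> x * max C 0" using xB by (intro mult_left_mono) auto
    then show ?thesis using z assms(2) by (simp add: mult.commute)
  qed
  then show ?thesis by (intro exI[of _ "max C 0"]) auto
qed

lemma gronwall_lower:
  fixes x :: "real \<Rightarrow> real"
  assumes "a \<le> b" "continuous_on {a..b} x"
    and "\<And>t. a < t \<Longrightarrow> t < b \<Longrightarrow> (x has_real_derivative x' t) (at t) \<and> x' t \<ge> - K * x t"
  shows "x b \<ge> x a * exp (- K * (b - a))"
proof -
  let ?y = "\<lambda>t. exp (K * t) * x t"
  have "?y a \<le> ?y b"
  proof (rule DERIV_nonneg_imp_increasing_open[OF assms(1)])
    fix t assume t: "a < t" "t < b"
    have d: "(?y has_real_derivative (exp (K*t) * K * x t + exp (K * t) * x' t)) (at t)"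
      using assms(3)[OF t] by (auto intro!: derivative_eq_intros)
    have "exp (K*t) * K * x t + exp (K * t) * x' t = exp (K*t) * (K * x t + x' t)"
      by (simp add: algebra_simps)
    also have "\<dots> \<ge> 0" using assms(3)[OF t] by (intro mult_nonneg_nonneg) auto
    finally show "\<exists>y. (?y has_real_derivative y) (at t) \<and> 0 \<le> y" using d by blast
  next
    show "continuous_on {a..b} ?y" using assms(2) by (intro continuous_intros)
  qed
  then have "exp (K*a) * x a * exp (- K * b) \<le> exp (K*b) * x b * exp (- K * b)"
    by (intro mult_right_mono) auto
  then show ?thesis by (simp add: algebra_simps exp_add[symmetric] exp_diff)
qed




locale tde =
  fixes \<mu> lam g \<gamma> \<delta> \<delta>0 m NT t0 :: real
    and f f' h h' R R' \<phi>1 \<phi>2 \<phi>3 N P Z :: "real \<Rightarrow> real"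
  assumes mu_lam: "\<mu> > lam" and lam_pos: "lam > 0" and g_pos: "g > 0" and gam_pos: "0 < \<gamma>"
    and gam_le: "\<gamma> \<le> 1" and del_pos: "\<delta> > 0" and gam_g: "\<gamma> * g > \<delta>"
    and del0: "\<delta>0 \<ge> 0" and m_pos: "m > 0" and NT_pos: "NT > 0"
    and f_C1: "C1_nonneg f f'" and f_nn: "\<forall>x\<ge>0. f x \<ge> 0" and f0: "f 0 = 0" and f'_pos: "\<forall>x\<ge>0. f' x > 0"
    and f_lim: "(f \<longlongrightarrow> 1) at_top"
    and h_C1: "C1_nonneg h h'" and h_nn: "\<forall>x\<ge>0. h x \<ge> 0" and h0: "h 0 = 0" and h'_pos: "\<forall>x\<ge>0. h' x > 0"
    and h_lim: "(h \<longlongrightarrow> 1) at_top"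
    and R_C1: "C1_nonneg R R'" and R_nn: "\<forall>x\<ge>0. R x \<ge> 0" and R'_nn: "\<forall>x\<ge>0. R' x \<ge> 0"
    and R0: "R 0 = 0 \<longrightarrow> R' 0 > 0" and R_lim: "\<exists>Rinf. (R \<longlongrightarrow> Rinf) at_top"
    and D: "D_NT R h \<gamma> g \<delta>0 m NT t0 \<phi>1 \<phi>2 \<phi>3"
    and sol: "TDE_solution \<mu> lam g \<gamma> \<delta> \<delta>0 m NT t0 f h R \<phi>1 \<phi>2 \<phi>3 N P Z"
begin

lemma t0_pos: "t0 > 0" using D unfolding D_NT_def by blast

lemma int_phi: "integral {-t0..0} (\<lambda>u. R (\<phi>2 u)) = m" using D unfolding D_NT_def by blast

lemma NT_eq: "NT = \<phi>1 0 + \<phi>2 0 + \<phi>3 0 +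
       integral {0..m} (\<lambda>s. let \<tau> = delay R \<phi>2 (-t0) 0 s in
          exp (-\<delta>0 * \<tau>) * \<gamma> * g * \<phi>3 (-\<tau>) * h (\<phi>2 (-\<tau>)) / R (\<phi>2 (-\<tau>)))"
  using D unfolding D_NT_def by blast

lemma phi_pos: "u \<in> {-t0..0} \<Longrightarrow> \<phi>1 u > 0 \<and> \<phi>2 u > 0 \<and> \<phi>3 u > 0"
  using D unfolding D_NT_def by blast

lemma init: "u \<in> {0..t0} \<Longrightarrow> N u = \<phi>1 (u - t0) \<and> P u = \<phi>2 (u - t0) \<and> Z u = \<phi>3 (u - t0)"
proof -
  assume u: "u \<in> {0..t0}"
  have "u - t0 \<in> {-t0..0}" using u by auto
  then have "N (t0 + (u - t0)) = \<phi>1 (u - t0) \<and> P (t0 + (u - t0)) = \<phi>2 (u - t0) \<and> Z (t0 + (u - t0)) = \<phi>3 (u - t0)"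
    using sol unfolding TDE_solution_def by blast
  then show ?thesis by simp
qed

lemma init_pos: "u \<in> {0..t0} \<Longrightarrow> N u > 0 \<and> P u > 0 \<and> Z u > 0"
  using init[of u] phi_pos[of "u - t0"] by auto

lemma NPZ_cont: "continuous_on {0..} N" "continuous_on {0..} P" "continuous_on {0..} Z"
  using sol unfolding TDE_solution_def by auto

lemma R_cont: "continuous_on {0..} R" by (rule C1_cont[OF R_C1])
lemma h_cont: "continuous_on {0..} h" by (rule C1_cont[OF h_C1])
lemma f_cont: "continuous_on {0..} f" by (rule C1_cont[OF f_C1])

lemma R_pos: assumes "x > 0" shows "R x > 0"
proof (cases "R 0 = 0")
  case False
  then have "R 0 > 0" using R_nn by force
  moreover have "R 0 \<le> R x" using C1_mono[OF R_C1 R'_nn, of 0 x] assms by auto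
  ultimately show ?thesis by simp
next
  case True
  then have "R' 0 > 0" using R0 by simp
  moreover have "(R has_real_derivative R' 0) (at 0 within {0..})" using R_C1 unfolding C1_nonneg_def by auto
  ultimately obtain d where d: "d > 0" "\<forall>e>0. 0 + e \<in> {0..} \<longrightarrow> e < d \<longrightarrow> R 0 < R (0 + e)"
    using has_real_derivative_pos_inc_right by blast
  define y where "y = min x (d/2)"
  have "R 0 < R y" using d assms unfolding y_def by auto
  moreover have "R y \<le> R x" using C1_mono[OF R_C1 R'_nn, of y x] assms d unfolding y_def by auto
  ultimately show ?thesis using True by simp
qed

lemma cont_comp0:
  assumes "continuous_on {0..} F" "continuous_on {a..b} x" "\<forall>u\<in>{a..b}. x u \<ge> 0"
  shows "continuous_on {a..b} (\<lambda>u. F (x u))"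
proof -
  have "x ` {a..b} \<subseteq> {0..}" using assms(3) by auto
  then show ?thesis using continuous_on_compose2[OF assms(1) assms(2)] by auto
qed

definition G :: "real \<Rightarrow> real" where "G t = integral {0..t} (\<lambda>u. R (P u))"

definition Ginv :: "real \<Rightarrow> real \<Rightarrow> real" where
  "Ginv T y = (THE x. x \<in> {0..T} \<and> G x = y)"

definition a :: "real \<Rightarrow> real \<Rightarrow> real" where "a T t = Ginv T (G t - m)"

definition kk :: "real \<Rightarrow> real" where "kk u = \<gamma> * g * Z u * h (P u)"

definition K :: "real \<Rightarrow> real" where "K t = integral {0..t} (\<lambda>u. exp (\<delta>0 * u) * kk u)"

definition W :: "real \<Rightarrow> real" where
  "W t = integral {t - delay R P 0 t m..t} (\<lambda>u. exp (- \<delta>0 * (t - u)) * kk u)"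

definition Psi :: "real \<Rightarrow> real" where "Psi x = exp (- \<delta>0 * (t0 - x)) * kk x / R (P x)"

lemma refl_shift: "integral {0..c} (\<lambda>s. F (c - s)) = integral {0..c::real} (F :: real \<Rightarrow> real)"
proof -
  have "integral {-c..0} ((\<lambda>s. F (c - s)) \<circ> (+) c) = integral {-c+c..0+c} (\<lambda>s. F (c - s))"
    by (rule integral_shift_Icc_real)
  moreover have "(\<lambda>s. F (c - s)) \<circ> (+) c = (\<lambda>w. F (- w))" by (auto simp: o_def)
  ultimately have "integral {0..c} (\<lambda>s. F (c - s)) = integral {-c..-0} (\<lambda>w. F (- w))" by simp
  also have "\<dots> = integral {0..c} F" using Henstock_Kurzweil_Integration.integral_reflect_real[of c 0 F] by simp
  finally show ?thesis .
qed


context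
  fixes T assumes T: "T \<ge> t0" and Ppos: "\<forall>u\<in>{0..T}. P u > 0"
begin

lemma q_cont: "continuous_on {0..T} (\<lambda>u. R (P u))"
proof (rule cont_comp0[OF R_cont])
  show "continuous_on {0..T} P" using NPZ_cont(2) by (rule continuous_on_subset) auto
qed (use Ppos in auto)

lemma q_pos: "u \<in> {0..T} \<Longrightarrow> R (P u) > 0"
  using Ppos R_pos by auto

lemma G_deriv: "x \<in> {0..T} \<Longrightarrow> (G has_real_derivative R (P x)) (at x within {0..T})"
  unfolding G_def by (rule integral_has_real_derivative[OF q_cont])

lemma G_deriv_at: "x \<in> {0<..<T} \<Longrightarrow> (G has_real_derivative R (P x)) (at x)"
  using G_deriv[of x] at_within_interior[of x "{0..T}"] by auto

lemma G_cont: "continuous_on {0..T} G"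
  using G_deriv by (rule DERIV_continuous_on)

lemma G_int: "x \<le> y \<Longrightarrow> x \<in> {0..T} \<Longrightarrow> y \<in> {0..T} \<Longrightarrow> integral {x..y} (\<lambda>u. R (P u)) = G y - G x"
proof -
  assume xy: "x \<le> y" "x \<in> {0..T}" "y \<in> {0..T}"
  have i: "(\<lambda>u. R (P u)) integrable_on {0..y}"
    by (rule integrable_continuous_real, rule continuous_on_subset[OF q_cont]) (use xy in auto)
  show ?thesis unfolding G_def using Henstock_Kurzweil_Integration.integral_combine[OF _ _ i, of x] xy by auto
qed

lemma G_strict: "x < y \<Longrightarrow> x \<in> {0..T} \<Longrightarrow> y \<in> {0..T} \<Longrightarrow> G x < G y"
proof -
  assume xy: "x < y" "x \<in> {0..T}" "y \<in> {0..T}"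
  have "\<And>t. x \<le> t \<Longrightarrow> t \<le> y \<Longrightarrow> (G has_derivative (\<lambda>h. h * R (P t))) (at t within {x..y})"
  proof -
    fix t assume t: "x \<le> t" "t \<le> y"
    have "(G has_real_derivative R (P t)) (at t within {x..y})"
      by (rule DERIV_subset[OF G_deriv]) (use t xy in auto)
    moreover have e: "(\<lambda>h. h * R (P t)) = (*) (R (P t))" by (auto simp: fun_eq_iff)
    ultimately show "(G has_derivative (\<lambda>h. h * R (P t))) (at t within {x..y})"
      unfolding e by (simp add: has_field_derivative_def)
  qed
  from mvt_simple[OF xy(1) this] obtain z where z: "z \<in> {x<..<y}" "G y - G x = (y - x) * R (P z)"
    by auto
  have "R (P z) > 0" using q_pos[of z] z xy by auto
  moreover have "y - x > 0" using xy by simp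
  ultimately have "(y - x) * R (P z) > 0" by simp
  then show ?thesis using z by simp
qed

lemma G_inj: "x \<in> {0..T} \<Longrightarrow> y \<in> {0..T} \<Longrightarrow> G x = G y \<Longrightarrow> x = y"
  using G_strict[of x y] G_strict[of y x] by (cases x y rule: linorder_cases) auto

lemma G0: "G 0 = 0" unfolding G_def by simp

lemma Gt0: "G t0 = m"
proof -
  have "integral {0..t0} (\<lambda>u. R (P u)) = integral {0..t0} (\<lambda>u. R (\<phi>2 (u - t0)))"
    by (rule integral_cong) (use init in auto)
  also have "\<dots> = integral {0 + (-t0)..t0 + (-t0)} (\<lambda>u. R (\<phi>2 u))"
    using integral_shift_Icc_real[of 0 t0 "\<lambda>u. R (\<phi>2 u)" "-t0"] by (simp add: o_def add.commute)
  also have "\<dots> = m" using int_phi by simp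
  finally show ?thesis unfolding G_def .
qed

lemma Ginv_prop: assumes "y \<in> {0..G T}" shows "Ginv T y \<in> {0..T} \<and> G (Ginv T y) = y"
proof -
  have "T \<ge> 0" using T t0_pos by simp
  obtain x where x: "0 \<le> x" "x \<le> T" "G x = y"
    using IVT'[of G 0 y T] G_cont assms G0 \<open>T \<ge> 0\<close> by auto
  have "Ginv T y = x" unfolding Ginv_def
  proof (rule the_equality)
    show "x \<in> {0..T} \<and> G x = y" using x by simp
    fix x' assume "x' \<in> {0..T} \<and> G x' = y"
    then show "x' = x" using G_inj[of x' x] x by simp
  qed
  then show ?thesis using x by simp
qed

lemma Ginv_G: "x \<in> {0..T} \<Longrightarrow> Ginv T (G x) = x"
proof -
  assume x: "x \<in> {0..T}"
  show ?thesis unfolding Ginv_def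
  proof (rule the_equality)
    show "x \<in> {0..T} \<and> G x = G x" using x by simp
    fix x' assume "x' \<in> {0..T} \<and> G x' = G x"
    then show "x' = x" using G_inj[of x' x] x by simp
  qed
qed

lemma G_image: "G ` {0..T} = {0..G T}"
proof
  show "G ` {0..T} \<subseteq> {0..G T}"
  proof
    fix y assume "y \<in> G ` {0..T}"
    then obtain x where x: "x \<in> {0..T}" "y = G x" by auto
    have "G 0 \<le> G x" using G_strict[of 0 x] x T by (cases "x = 0") (auto simp: less_imp_le)
    moreover have "G x \<le> G T" using G_strict[of x T] x T by (cases "x = T") (auto simp: less_imp_le)
    ultimately show "y \<in> {0..G T}" using x G0 by auto
  qed
  show "{0..G T} \<subseteq> G ` {0..T}"
    using Ginv_prop by (metis image_eqI subsetI)
qed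

lemma Ginv_cont: "continuous_on {0..G T} (Ginv T)"
  using continuous_on_inv[OF G_cont compact_Icc] Ginv_G G_image by auto

lemma T_pos: "T > 0" using T t0_pos by simp

lemma Gm_range: "t \<in> {t0..T} \<Longrightarrow> G t - m \<in> {0..G T}"
proof -
  assume t: "t \<in> {t0..T}"
  have "G t0 \<le> G t" using G_strict[of t0 t] t t0_pos by (cases "t = t0") (auto simp: less_imp_le)
  moreover have "G t \<le> G T" using G_strict[of t T] t t0_pos by (cases "t = T") (auto simp: less_imp_le)
  ultimately show ?thesis using Gt0 m_pos by auto
qed

lemma a_prop: "t \<in> {t0..T} \<Longrightarrow> a T t \<in> {0..t} \<and> G (a T t) = G t - m"
proof -
  assume t: "t \<in> {t0..T}"
  have 1: "a T t \<in> {0..T}" "G (a T t) = G t - m"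
    using Ginv_prop[OF Gm_range[OF t]] unfolding a_def by auto
  have "a T t \<le> t"
  proof (rule ccontr)
    assume "\<not> a T t \<le> t"
    then have "G t < G (a T t)" using G_strict[of t "a T t"] 1 t t0_pos by auto
    then show False using 1 m_pos by simp
  qed
  then show ?thesis using 1 by auto
qed

lemma a_pos: "t \<in> {t0<..T} \<Longrightarrow> a T t > 0"
proof -
  assume t: "t \<in> {t0<..T}"
  then have "G t0 < G t" using G_strict[of t0 t] t0_pos by auto
  then have "G (a T t) > G 0" using a_prop[of t] t Gt0 G0 by auto
  moreover have "a T t \<ge> 0" using a_prop[of t] t by auto
  ultimately show ?thesis using G0 by (cases "a T t = 0") auto
qed

lemma a_lt: "t \<in> {t0..T} \<Longrightarrow> a T t < t"
proof -
  assume t: "t \<in> {t0..T}"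
  have "a T t \<le> t" "G (a T t) = G t - m" using a_prop[OF t] by auto
  then show ?thesis using m_pos by (cases "a T t = t") auto
qed

lemma a_t0: "a T t0 = 0"
  unfolding a_def using Gt0 G0 Ginv_G[of 0] T_pos by simp

lemma delay_eq: "t \<in> {t0..T} \<Longrightarrow> delay R P 0 t m = t - a T t"
proof -
  assume t: "t \<in> {t0..T}"
  note A = a_prop[OF t]
  show ?thesis unfolding delay_def
  proof (rule the_equality)
    show "0 \<le> t - a T t \<and> 0 \<le> t - (t - a T t) \<and> integral {t - (t - a T t)..t} (\<lambda>u. R (P u)) = m"
      using A G_int[of "a T t" t] t by auto
  next
    fix \<tau> assume \<tau>: "0 \<le> \<tau> \<and> 0 \<le> t - \<tau> \<and> integral {t - \<tau>..t} (\<lambda>u. R (P u)) = m"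
    then have "G t - G (t - \<tau>) = m" using G_int[of "t - \<tau>" t] t by auto
    then have "G (t - \<tau>) = G (a T t)" using A by simp
    then have "t - \<tau> = a T t" using G_inj[of "t - \<tau>" "a T t"] A \<tau> t by auto
    then show "\<tau> = t - a T t" by simp
  qed
qed

lemma a_cont: "continuous_on {t0..T} (a T)"
proof -
  have c: "continuous_on {t0..T} (\<lambda>t. G t - m)"
    by (intro continuous_intros continuous_on_subset[OF G_cont]) (use t0_pos in auto)
  have "(\<lambda>t. G t - m) ` {t0..T} \<subseteq> {0..G T}" using Gm_range by blast
  then have "continuous_on {t0..T} (\<lambda>t. Ginv T (G t - m))"
    using continuous_on_compose2[OF Ginv_cont c] by blast
  then show ?thesis unfolding a_def[abs_def] .
qed

lemma a_deriv: "t \<in> {t0<..<T} \<Longrightarrow> (a T has_real_derivative R (P t) / R (P (a T t))) (at t)"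
proof -
  assume t: "t \<in> {t0<..<T}"
  define y where "y = G t - m"
  have at: "a T t \<in> {0<..<T}" using a_pos[of t] a_lt[of t] t by auto
  have Gy: "G (a T t) = y" using a_prop[of t] t unfolding y_def by auto
  have y0: "0 < y" using G_strict[of 0 "a T t"] at G0 Gy by auto
  have y1: "y < G T" using G_strict[of "a T t" T] at Gy by auto
  have dG: "DERIV G (Ginv T y) :> R (P (a T t))"
    using G_deriv_at[of "a T t"] at unfolding a_def y_def by auto
  have "DERIV (Ginv T) y :> inverse (R (P (a T t)))"
  proof (rule DERIV_inverse_function[where f=G and g="Ginv T" and x=y and a=0 and b="G T", OF dG _ y0 y1])
    show "R (P (a T t)) \<noteq> 0" using q_pos[of "a T t"] at by auto
    show "G (Ginv T z) = z" if "0 < z" "z < G T" for z using Ginv_prop[of z] that by auto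
    show "isCont (Ginv T) y"
      by (rule continuous_on_interior[OF Ginv_cont]) (use y0 y1 in auto)
  qed
  moreover have "DERIV (\<lambda>t. G t - m) t :> R (P t)"
    using G_deriv_at[of t] t t0_pos by (auto intro!: derivative_eq_intros)
  ultimately have "DERIV (\<lambda>t. Ginv T (G t - m)) t :> inverse (R (P (a T t))) * R (P t)"
    unfolding y_def by (rule DERIV_chain2)
  then show ?thesis unfolding a_def[abs_def] by (simp add: field_simps)
qed

lemma kk_cont: "continuous_on {0..T} kk"
proof -
  have "continuous_on {0..T} P" "continuous_on {0..T} Z"
    using NPZ_cont by (auto intro: continuous_on_subset)
  moreover have "continuous_on {0..T} (\<lambda>u. h (P u))"
    by (rule cont_comp0[OF h_cont]) (use Ppos \<open>continuous_on {0..T} P\<close> in auto)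
  ultimately show ?thesis unfolding kk_def by (intro continuous_intros) auto
qed

lemma K_deriv: "x \<in> {0..T} \<Longrightarrow> (K has_real_derivative exp (\<delta>0 * x) * kk x) (at x within {0..T})"
  unfolding K_def by (rule integral_has_real_derivative) (intro continuous_intros kk_cont)

lemma K_deriv_at: "x \<in> {0<..<T} \<Longrightarrow> (K has_real_derivative exp (\<delta>0 * x) * kk x) (at x)"
  using K_deriv[of x] at_within_interior[of x "{0..T}"] by auto

lemma K_cont: "continuous_on {0..T} K"
  using K_deriv by (rule DERIV_continuous_on)

lemma W_int: "t \<in> {t0..T} \<Longrightarrow> W t = integral {a T t..t} (\<lambda>u. exp (- \<delta>0 * (t - u)) * kk u)"
  unfolding W_def using delay_eq by simp

lemma W_eq: "t \<in> {t0..T} \<Longrightarrow> W t = exp (- \<delta>0 * t) * (K t - K (a T t))"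
proof -
  assume t: "t \<in> {t0..T}"
  have A: "a T t \<in> {0..t}" using a_prop t by auto
  have i: "(\<lambda>u. exp (\<delta>0 * u) * kk u) integrable_on {0..t}"
    by (rule integrable_continuous_real) (intro continuous_intros continuous_on_subset[OF kk_cont], use t in auto)
  have "W t = integral {a T t..t} (\<lambda>u. exp (- \<delta>0 * t) * (exp (\<delta>0 * u) * kk u))"
    unfolding W_int[OF t] by (rule integral_cong) (simp add: algebra_simps exp_add[symmetric])
  also have "\<dots> = exp (- \<delta>0 * t) * integral {a T t..t} (\<lambda>u. exp (\<delta>0 * u) * kk u)"
    by simp
  also have "integral {a T t..t} (\<lambda>u. exp (\<delta>0 * u) * kk u) = K t - K (a T t)"
    unfolding K_def using Henstock_Kurzweil_Integration.integral_combine[OF _ _ i, of "a T t"] A by auto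
  finally show ?thesis .
qed

lemma shift_phi: "c \<in> {0..t0} \<Longrightarrow> integral {c - t0..0} (\<lambda>u. R (\<phi>2 u)) = G t0 - G c"
proof -
  assume c: "c \<in> {0..t0}"
  have "integral {c..t0} ((\<lambda>u. R (\<phi>2 u)) \<circ> (+) (-t0)) = integral {c + -t0..t0 + -t0} (\<lambda>u. R (\<phi>2 u))"
    by (rule integral_shift_Icc_real)
  then have "integral {c - t0..0} (\<lambda>u. R (\<phi>2 u)) = integral {c..t0} (\<lambda>u. R (\<phi>2 (u - t0)))"
    by (simp add: o_def)
  also have "\<dots> = integral {c..t0} (\<lambda>u. R (P u))"
    by (rule integral_cong) (use init c in auto)
  also have "\<dots> = G t0 - G c" using G_int[of c t0] c T by auto
  finally show ?thesis .
qed

lemma Ginv_small: "y \<in> {0..m} \<Longrightarrow> Ginv T y \<in> {0..t0} \<and> G (Ginv T y) = y"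
proof -
  assume y: "y \<in> {0..m}"
  have "m \<le> G T" using Gm_range[of T] T by auto
  then have P: "Ginv T y \<in> {0..T} \<and> G (Ginv T y) = y" using Ginv_prop[of y] y by auto
  have "Ginv T y \<le> t0"
  proof (rule ccontr)
    assume "\<not> Ginv T y \<le> t0"
    then have "G t0 < G (Ginv T y)" using G_strict[of t0 "Ginv T y"] P t0_pos by auto
    then show False using P Gt0 y by auto
  qed
  then show ?thesis using P by auto
qed

lemma delay_phi: "s \<in> {0..m} \<Longrightarrow> delay R \<phi>2 (-t0) 0 s = t0 - Ginv T (m - s)"
proof -
  assume s: "s \<in> {0..m}"
  have X: "Ginv T (m - s) \<in> {0..t0}" "G (Ginv T (m - s)) = m - s" using Ginv_small[of "m - s"] s by auto
  show ?thesis unfolding delay_def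
  proof (rule the_equality)
    show "0 \<le> t0 - Ginv T (m - s) \<and> - t0 \<le> 0 - (t0 - Ginv T (m - s)) \<and>
      integral {0 - (t0 - Ginv T (m - s))..0} (\<lambda>u. R (\<phi>2 u)) = s"
      using X shift_phi[of "Ginv T (m - s)"] Gt0 by auto
  next
    fix \<tau> assume \<tau>: "0 \<le> \<tau> \<and> - t0 \<le> 0 - \<tau> \<and> integral {0 - \<tau>..0} (\<lambda>u. R (\<phi>2 u)) = s"
    then have "G t0 - G (t0 - \<tau>) = s" using shift_phi[of "t0 - \<tau>"] by auto
    then have "G (t0 - \<tau>) = G (Ginv T (m - s))" using X Gt0 by simp
    then have "t0 - \<tau> = Ginv T (m - s)" using G_inj[of "t0 - \<tau>" "Ginv T (m - s)"] X \<tau> T by auto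
    then show "\<tau> = t0 - Ginv T (m - s)" by simp
  qed
qed

lemma Psi_cont: "continuous_on {0..t0} Psi"
proof -
  have "continuous_on {0..t0} kk" "continuous_on {0..t0} (\<lambda>u. R (P u))"
    using kk_cont q_cont T by (auto intro: continuous_on_subset)
  then show ?thesis
  proof -
    have nz: "\<forall>x\<in>{0..t0}. R (P x) \<noteq> 0" using q_pos T by (metis atLeastAtMost_iff order_trans less_irrefl)
    show ?thesis unfolding Psi_def
      using nz \<open>continuous_on {0..t0} kk\<close> \<open>continuous_on {0..t0} (\<lambda>u. R (P u))\<close>
      by (intro continuous_intros) auto
  qed
qed

lemma INIT: "integral {0..t0} (\<lambda>u. exp (- \<delta>0 * (t0 - u)) * kk u) =
  integral {0..m} (\<lambda>s. let \<tau> = delay R \<phi>2 (- t0) 0 s in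
          exp (- \<delta>0 * \<tau>) * \<gamma> * g * \<phi>3 (- \<tau>) * h (\<phi>2 (- \<tau>)) / R (\<phi>2 (- \<tau>)))"
proof -
  have cG: "continuous_on {0..m} (\<lambda>y. Psi (Ginv T y))"
  proof (rule continuous_on_compose2[OF Psi_cont])
    have "m \<le> G T" using Gm_range[of T] T by auto
    then show "continuous_on {0..m} (Ginv T)" using continuous_on_subset[OF Ginv_cont, of "{0..m}"] by auto
  qed (use Ginv_small in auto)
  have sub: "((\<lambda>x. R (P x) *\<^sub>R Psi (Ginv T (G x))) has_integral integral {G 0..G t0} (\<lambda>y. Psi (Ginv T y))) {0..t0}"
  proof (rule has_integral_substitution[OF _ _ _ cG])
    show "G ` {0..t0} \<subseteq> {0..m}"
    proof
      fix y assume "y \<in> G ` {0..t0}"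
      then obtain x where x: "x \<in> {0..t0}" "y = G x" by auto
      have "G 0 \<le> G x" using G_strict[of 0 x] x T by (cases "x = 0") (auto simp: less_imp_le)
      moreover have "G x \<le> G t0" using G_strict[of x t0] x T t0_pos by (cases "x = t0") (auto simp: less_imp_le)
      ultimately show "y \<in> {0..m}" using x G0 Gt0 by auto
    qed
    show "(G has_real_derivative R (P x)) (at x within {0..t0})" if "x \<in> {0..t0}" for x
      by (rule DERIV_subset[OF G_deriv]) (use that T in auto)
  qed (use G0 Gt0 t0_pos m_pos in auto)
  have "((\<lambda>u. exp (- \<delta>0 * (t0 - u)) * kk u) has_integral integral {0..m} (\<lambda>y. Psi (Ginv T y))) {0..t0}"
  proof -
    have "\<And>x. x \<in> {0..t0} \<Longrightarrow> R (P x) *\<^sub>R Psi (Ginv T (G x)) = exp (- \<delta>0 * (t0 - x)) * kk x"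
    proof -
      fix x assume x: "x \<in> {0..t0}"
      have "Ginv T (G x) = x" using Ginv_G[of x] x T by auto
      moreover have "R (P x) > 0" using q_pos[of x] x T by auto
      ultimately show "R (P x) *\<^sub>R Psi (Ginv T (G x)) = exp (- \<delta>0 * (t0 - x)) * kk x"
        unfolding Psi_def by simp
    qed
    then have "((\<lambda>x. R (P x) *\<^sub>R Psi (Ginv T (G x))) has_integral integral {0..m} (\<lambda>y. Psi (Ginv T y))) {0..t0}
       = ((\<lambda>u. exp (- \<delta>0 * (t0 - u)) * kk u) has_integral integral {0..m} (\<lambda>y. Psi (Ginv T y))) {0..t0}"
      by (rule has_integral_cong)
    then show ?thesis using sub G0 Gt0 by simp
  qed
  then have 1: "integral {0..t0} (\<lambda>u. exp (- \<delta>0 * (t0 - u)) * kk u) = integral {0..m} (\<lambda>y. Psi (Ginv T y))"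
    by (rule integral_unique)
  also have "\<dots> = integral {0..m} (\<lambda>s. Psi (Ginv T (m - s)))"
    using refl_shift[where F="\<lambda>y. Psi (Ginv T y)" and c=m] by simp
  also have "\<dots> = integral {0..m} (\<lambda>s. let \<tau> = delay R \<phi>2 (- t0) 0 s in
          exp (- \<delta>0 * \<tau>) * \<gamma> * g * \<phi>3 (- \<tau>) * h (\<phi>2 (- \<tau>)) / R (\<phi>2 (- \<tau>)))"
  proof (rule integral_cong)
    fix s assume s: "s \<in> {0..m}"
    define x where "x = Ginv T (m - s)"
    have x: "x \<in> {0..t0}" using Ginv_small[of "m - s"] s unfolding x_def by auto
    have "- (t0 - x) = x - t0" by simp
    then show "Psi (Ginv T (m - s)) = (let \<tau> = delay R \<phi>2 (- t0) 0 s in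
          exp (- \<delta>0 * \<tau>) * \<gamma> * g * \<phi>3 (- \<tau>) * h (\<phi>2 (- \<tau>)) / R (\<phi>2 (- \<tau>)))"
      unfolding delay_phi[OF s] x_def[symmetric] Let_def Psi_def kk_def using init[OF x]
      by (simp add: mult.assoc)
  qed
  finally show ?thesis .
qed

end
end



context tde begin

lemma sol_deriv: "t \<ge> t0 \<Longrightarrow>
        (N has_real_derivative
           (- \<mu> * P t * f (N t) + lam * P t + \<delta> * Z t + (1 - \<gamma>) * g * Z t * h (P t)
            + \<delta>0 * (NT - N t - P t - Z t))) (at t within {t0..}) \<and>
        (P has_real_derivative
           (\<mu> * P t * f (N t) - lam * P t - g * Z t * h (P t))) (at t within {t0..}) \<and>
        (Z has_real_derivative
           (let \<tau> = delay R P 0 t m in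
              R (P t) * exp (-\<delta>0 * \<tau>) * \<gamma> * g * Z (t - \<tau>) * h (P (t - \<tau>)) / R (P (t - \<tau>))
              - \<delta> * Z t)) (at t within {t0..})"
  using sol unfolding TDE_solution_def by blast

lemma at_t0: "t > t0 \<Longrightarrow> at t within {t0..} = at t"
  by (rule at_within_interior) simp

lemma dN: "t > t0 \<Longrightarrow> (N has_real_derivative
           (- \<mu> * P t * f (N t) + lam * P t + \<delta> * Z t + (1 - \<gamma>) * g * Z t * h (P t)
            + \<delta>0 * (NT - N t - P t - Z t))) (at t)"
  using sol_deriv[of t] at_t0[of t] by simp

lemma dP: "t > t0 \<Longrightarrow> (P has_real_derivative
           (\<mu> * P t * f (N t) - lam * P t - g * Z t * h (P t))) (at t)"
  using sol_deriv[of t] at_t0[of t] by simp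

lemma dZ: "t > t0 \<Longrightarrow> (Z has_real_derivative
           (let \<tau> = delay R P 0 t m in
              R (P t) * exp (-\<delta>0 * \<tau>) * \<gamma> * g * Z (t - \<tau>) * h (P (t - \<tau>)) / R (P (t - \<tau>))
              - \<delta> * Z t)) (at t)"
  using sol_deriv[of t] at_t0[of t] by simp

context
  fixes T assumes T: "T \<ge> t0" and Ppos: "\<forall>u\<in>{0..T}. P u > 0"
begin

lemma dZ': "t \<in> {t0<..<T} \<Longrightarrow> (Z has_real_derivative
   R (P t) * (exp (\<delta>0 * a T t) / exp (\<delta>0 * t)) * \<gamma> * g * Z (a T t) * h (P (a T t)) / R (P (a T t))
              - \<delta> * Z t) (at t)"
proof -
  assume t: "t \<in> {t0<..<T}"
  have de: "delay R P 0 t m = t - a T t" using delay_eq[OF T Ppos, of t] t by auto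
  have "exp (-\<delta>0 * (t - a T t)) = exp (\<delta>0 * a T t) / exp (\<delta>0 * t)"
    by (simp add: exp_diff[symmetric] algebra_simps)
  then show ?thesis using dZ[of t] t unfolding de Let_def by simp
qed

definition V :: "real \<Rightarrow> real \<Rightarrow> real" where
  "V T' t = exp (\<delta>0 * t) * (N t + P t + Z t - NT) + (K t - K (a T' t))"

lemma V_deriv: "t \<in> {t0<..<T} \<Longrightarrow> (V T has_real_derivative 0) (at t)"
proof -
  assume t: "t \<in> {t0<..<T}"
  define A where "A = a T t"
  have At: "A \<in> {0<..<T}" using a_pos[OF T Ppos, of t] a_lt[OF T Ppos, of t] t unfolding A_def by auto
  have ra: "R (P A) > 0" using q_pos[OF T Ppos, of A] At by auto
  have k1: "DERIV K (a T t) :> exp (\<delta>0 * A) * kk A" using K_deriv_at[OF T Ppos, of A] At unfolding A_def by simp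
  have k2: "DERIV (a T) t :> R (P t) / R (P A)" using a_deriv[OF T Ppos, of t] t unfolding A_def by simp
  have dKa: "DERIV (\<lambda>s. K (a T s)) t :> exp (\<delta>0 * A) * kk A * (R (P t) / R (P A))"
    by (rule DERIV_chain2[OF k1 k2])
  have dK: "DERIV K t :> exp (\<delta>0 * t) * kk t" using K_deriv_at[OF T Ppos, of t] t t0_pos by auto
  have dE: "DERIV (\<lambda>s. exp (\<delta>0 * s)) t :> exp (\<delta>0 * t) * \<delta>0"
    by (auto intro!: derivative_eq_intros)
  have tt: "t > t0" using t by simp
  have dS: "DERIV (\<lambda>s. N s + P s + Z s - NT) t :>
      (- \<mu> * P t * f (N t) + lam * P t + \<delta> * Z t + (1 - \<gamma>) * g * Z t * h (P t)
            + \<delta>0 * (NT - N t - P t - Z t)) + (\<mu> * P t * f (N t) - lam * P t - g * Z t * h (P t)) +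
      (R (P t) * (exp (\<delta>0 * A) / exp (\<delta>0 * t)) * \<gamma> * g * Z A * h (P A) / R (P A) - \<delta> * Z t) - 0"
    unfolding A_def by (intro DERIV_diff DERIV_add dN[OF tt] dP[OF tt] dZ'[OF t] DERIV_const)
  have dV: "DERIV (V T) t :> exp (\<delta>0 * t) * \<delta>0 * (N t + P t + Z t - NT) +
      ((- \<mu> * P t * f (N t) + lam * P t + \<delta> * Z t + (1 - \<gamma>) * g * Z t * h (P t)
            + \<delta>0 * (NT - N t - P t - Z t)) + (\<mu> * P t * f (N t) - lam * P t - g * Z t * h (P t)) +
      (R (P t) * (exp (\<delta>0 * A) / exp (\<delta>0 * t)) * \<gamma> * g * Z A * h (P A) / R (P A) - \<delta> * Z t) - 0) * exp (\<delta>0 * t)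
      + (exp (\<delta>0 * t) * kk t - exp (\<delta>0 * A) * kk A * (R (P t) / R (P A)))"
    unfolding V_def[abs_def] by (intro DERIV_add DERIV_mult dE dS DERIV_diff dK dKa)
  have "exp (\<delta>0 * t) * \<delta>0 * (N t + P t + Z t - NT) +
      ((- \<mu> * P t * f (N t) + lam * P t + \<delta> * Z t + (1 - \<gamma>) * g * Z t * h (P t)
            + \<delta>0 * (NT - N t - P t - Z t)) + (\<mu> * P t * f (N t) - lam * P t - g * Z t * h (P t)) +
      (R (P t) * (exp (\<delta>0 * A) / exp (\<delta>0 * t)) * \<gamma> * g * Z A * h (P A) / R (P A) - \<delta> * Z t) - 0) * exp (\<delta>0 * t)
      + (exp (\<delta>0 * t) * kk t - exp (\<delta>0 * A) * kk A * (R (P t) / R (P A))) = 0"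
    using ra unfolding kk_def by (simp add: field_simps)
  then show ?thesis using dV by simp
qed

lemma V_cont: "continuous_on {t0..T} (V T)"
proof -
  have s: "{t0..T} \<subseteq> {0..}" using t0_pos by auto
  have "continuous_on {t0..T} N" "continuous_on {t0..T} P" "continuous_on {t0..T} Z"
    using NPZ_cont continuous_on_subset[OF _ s] by blast+
  moreover have "continuous_on {t0..T} K"
    using K_cont[OF T Ppos] by (rule continuous_on_subset) (use t0_pos in auto)
  moreover have "continuous_on {t0..T} (\<lambda>t. K (a T t))"
  proof (rule continuous_on_compose2[OF K_cont[OF T Ppos] a_cont[OF T Ppos]])
    show "a T ` {t0..T} \<subseteq> {0..T}"
    proof
      fix y assume "y \<in> a T ` {t0..T}"
      then obtain t where t: "t \<in> {t0..T}" "y = a T t" by blast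
      then show "y \<in> {0..T}" using a_prop[OF T Ppos t(1)] by auto
    qed
  qed
  ultimately show ?thesis unfolding V_def[abs_def] by (intro continuous_intros) auto
qed

lemma V_t0: "V T t0 = 0"
proof -
  have t0T: "t0 \<in> {t0..T}" using T by simp
  have W1: "W t0 = exp (- \<delta>0 * t0) * (K t0 - K 0)" using W_eq[OF T Ppos t0T] a_t0[OF T Ppos] by simp
  have W2: "W t0 = integral {0..t0} (\<lambda>u. exp (- \<delta>0 * (t0 - u)) * kk u)"
    using W_int[OF T Ppos t0T] a_t0[OF T Ppos] by simp
  have K0: "K 0 = 0" unfolding K_def by simp
  have I: "W t0 = NT - \<phi>1 0 - \<phi>2 0 - \<phi>3 0" using W2 INIT[OF T Ppos] NT_eq by simp
  have "N t0 = \<phi>1 0" "P t0 = \<phi>2 0" "Z t0 = \<phi>3 0" using init[of t0] t0_pos by auto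
  moreover have "K t0 = exp (\<delta>0 * t0) * W t0" using W1 K0 by (simp add: exp_minus field_simps)
  ultimately show ?thesis unfolding V_def a_t0[OF T Ppos] K0 I by (simp add: algebra_simps)
qed

lemma CONS: "t \<in> {t0..T} \<Longrightarrow> N t + P t + Z t + W t = NT"
proof -
  assume t: "t \<in> {t0..T}"
  have "V T t0 \<le> V T t"
  proof (rule DERIV_nonneg_imp_increasing_open[of t0 t])
    fix x assume "t0 < x" "x < t"
    then have "DERIV (V T) x :> 0" using V_deriv[of x] t by auto
    then show "\<exists>y. DERIV (V T) x :> y \<and> 0 \<le> y" by auto
  next
    show "continuous_on {t0..t} (V T)"
      using continuous_on_subset[OF V_cont, of "{t0..t}"] t by auto
  qed (use t in auto)
  moreover have "(\<lambda>s. - V T s) t0 \<le> (\<lambda>s. - V T s) t"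
  proof (rule DERIV_nonneg_imp_increasing_open[of t0 t])
    fix x assume "t0 < x" "x < t"
    then have "DERIV (\<lambda>s. - V T s) x :> - 0" using V_deriv[of x] t by (intro DERIV_minus) auto
    then show "\<exists>y. DERIV (\<lambda>s. - V T s) x :> y \<and> 0 \<le> y" by auto
  next
    show "continuous_on {t0..t} (\<lambda>s. - V T s)"
      using continuous_on_subset[OF V_cont, of "{t0..t}"] t by (intro continuous_intros) auto
  qed (use t in auto)
  ultimately have "V T t = 0" using V_t0 by simp
  then have "exp (\<delta>0 * t) * (N t + P t + Z t - NT) + (K t - K (a T t)) = 0" unfolding V_def .
  then have "exp (- \<delta>0 * t) * (exp (\<delta>0 * t) * (N t + P t + Z t - NT) + (K t - K (a T t))) = 0" by simp
  then have "(N t + P t + Z t - NT) + exp (- \<delta>0 * t) * (K t - K (a T t)) = 0"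
    by (simp add: algebra_simps exp_minus)
  then show ?thesis using W_eq[OF T Ppos t] by simp
qed

lemma W_nonneg: "t \<in> {t0..T} \<Longrightarrow> \<forall>u\<in>{0..t}. Z u \<ge> 0 \<Longrightarrow> W t \<ge> 0"
proof -
  assume t: "t \<in> {t0..T}" and Z: "\<forall>u\<in>{0..t}. Z u \<ge> 0"
  have A: "a T t \<in> {0..t}" using a_prop[OF T Ppos t] by simp
  have "integral {a T t..t} (\<lambda>u. exp (- \<delta>0 * (t - u)) * kk u) \<ge> 0"
  proof (rule integral_nonneg)
    show "(\<lambda>u. exp (- \<delta>0 * (t - u)) * kk u) integrable_on {a T t..t}"
      by (rule integrable_continuous_real, intro continuous_intros continuous_on_subset[OF kk_cont[OF T Ppos]])
         (use A t in auto)
    fix u assume u: "u \<in> {a T t..t}"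
    then have "u \<in> {0..T}" using A t by auto
    then have "P u > 0" using Ppos by blast
    then have "h (P u) \<ge> 0" using h_nn by simp
    moreover have "Z u \<ge> 0" using Z u A by auto
    ultimately show "0 \<le> exp (- \<delta>0 * (t - u)) * kk u" unfolding kk_def
      using g_pos gam_pos by simp
  qed
  then show ?thesis using W_int[OF T Ppos t] by simp
qed

end
end



lemma gronwall_lower2:
  fixes x :: "real \<Rightarrow> real"
  assumes "a \<le> b" "continuous_on {a..b} x"
    and "\<And>t. a < t \<Longrightarrow> t < b \<Longrightarrow> \<exists>d. (x has_real_derivative d) (at t) \<and> d \<ge> - K * x t"
  shows "x b \<ge> x a * exp (- K * (b - a))"
proof -
  define x' where "x' t = (SOME d. (x has_real_derivative d) (at t) \<and> d \<ge> - K * x t)" for t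
  show ?thesis
  proof (rule gronwall_lower[OF assms(1,2), of x' K])
    fix t assume "a < t" "t < b"
    from someI_ex[OF assms(3)[OF this]] show "(x has_real_derivative x' t) (at t) \<and> x' t \<ge> - K * x t"
      unfolding x'_def .
  qed
qed

context tde begin

lemma pos_all: "t \<ge> t0 \<Longrightarrow> N t > 0 \<and> P t > 0 \<and> Z t > 0"
proof (rule ccontr)
  assume t: "t \<ge> t0" and bad: "\<not> (N t > 0 \<and> P t > 0 \<and> Z t > 0)"
  have sub: "{t0..t} \<subseteq> {0..}" using t0_pos by auto
  have cN: "continuous_on {t0..t} N" and cP: "continuous_on {t0..t} P" and cZ: "continuous_on {t0..t} Z"
    using NPZ_cont continuous_on_subset[OF _ sub] by blast+
  define B where "B = {x \<in> {t0..t}. N x \<le> 0} \<union> {x \<in> {t0..t}. P x \<le> 0} \<union> {x \<in> {t0..t}. Z x \<le> 0}"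
  have "closed B" unfolding B_def
    using continuous_on_closed_Collect_le[OF cN continuous_on_const closed_atLeastAtMost]
      continuous_on_closed_Collect_le[OF cP continuous_on_const closed_atLeastAtMost]
      continuous_on_closed_Collect_le[OF cZ continuous_on_const closed_atLeastAtMost]
    by (intro closed_Un) auto
  moreover have "t \<in> B" using bad t unfolding B_def by auto
  moreover have Bsub: "B \<subseteq> {t0..t}" unfolding B_def by auto
  moreover have "bdd_below B" unfolding bdd_below_def using Bsub by (intro exI[of _ t0]) auto
  ultimately have sB: "Inf B \<in> B" using closed_contains_Inf by blast
  define s where "s = Inf B"
  have sB': "s \<in> B" using sB unfolding s_def .
  have s_rng: "s \<in> {t0..t}" using sB' Bsub by auto
  have below: "x \<notin> B" if "x < s" for x
    using that cInf_lower[OF _ \<open>bdd_below B\<close>, of x] unfolding s_def by auto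
  have t0B: "t0 \<notin> B" using init_pos[of t0] t0_pos unfolding B_def by auto
  have st0: "s > t0" using s_rng t0B sB' by (cases "s = t0") auto
  have good: "N x > 0 \<and> P x > 0 \<and> Z x > 0" if "x \<in> {0..<s}" for x
  proof (cases "x \<le> t0")
    case True then show ?thesis using init_pos[of x] that by auto
  next
    case False
    then have "x \<in> {t0..t}" "x \<notin> B" using that s_rng below[of x] by auto
    then show ?thesis unfolding B_def by auto
  qed
  have subs: "{t0..s} \<subseteq> {0..}" using t0_pos by auto
  have cN: "continuous_on {t0..s} N" and cP: "continuous_on {t0..s} P" and cZ: "continuous_on {t0..s} Z"
    using NPZ_cont continuous_on_subset[OF _ subs] by blast+
  obtain BN where BN: "\<forall>x\<in>{t0..s}. \<bar>N x\<bar> \<le> BN" using cont_bound[OF cN] by blast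
  obtain BP where BP: "\<forall>x\<in>{t0..s}. \<bar>P x\<bar> \<le> BP" using cont_bound[OF cP] by blast
  obtain BZ where BZ: "\<forall>x\<in>{t0..s}. \<bar>Z x\<bar> \<le> BZ" using cont_bound[OF cZ] by blast
  have BP0: "BP \<ge> 0" using BP st0 by (meson abs_ge_zero atLeastAtMost_iff less_imp_le order_refl order_trans)
  have BZ0: "BZ \<ge> 0" using BZ st0 by (meson abs_ge_zero atLeastAtMost_iff less_imp_le order_refl order_trans)
  have BN0: "BN \<ge> 0" using BN st0 by (meson abs_ge_zero atLeastAtMost_iff less_imp_le order_refl order_trans)
  obtain Cf where Cf: "Cf \<ge> 0" "\<forall>x\<in>{0..BN}. f x \<le> Cf * x" using lin_bound[OF f_C1 f0 BN0] by blast
  obtain Ch where Ch: "Ch \<ge> 0" "\<forall>x\<in>{0..BP}. h x \<le> Ch * x" using lin_bound[OF h_C1 h0 BP0] by blast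
  have loc: "(x + s) / 2 \<ge> t0 \<and> (\<forall>u\<in>{0..(x + s) / 2}. P u > 0) \<and> x \<in> {t0<..<(x + s) / 2}"
    if x: "t0 < x" "x < s" for x
  proof -
    have "\<forall>u\<in>{0..(x + s) / 2}. P u > 0" using good x by auto
    then show ?thesis using x by auto
  qed
  have Zs: "Z s \<ge> Z t0 * exp (- \<delta> * (s - t0))"
  proof (rule gronwall_lower2[OF _ cZ])
    fix x assume x: "t0 < x" "x < s"
    define T where "T = (x + s) / 2"
    have T: "T \<ge> t0" and Pp: "\<forall>u\<in>{0..T}. P u > 0" and xT: "x \<in> {t0<..<T}" using loc[OF x] unfolding T_def by auto
    define A where "A = a T x"
    have A: "A \<in> {0..x}" using a_prop[OF T Pp, of x] xT unfolding A_def by auto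
    have PA: "P A > 0" and ZA: "Z A > 0" using good[of A] A x by auto
    have Px: "P x > 0" using good[of x] x t0_pos by auto
    have "R (P x) * (exp (\<delta>0 * A) / exp (\<delta>0 * x)) * \<gamma> * g * Z A * h (P A) / R (P A) \<ge> 0"
      using R_pos[OF Px] R_pos[OF PA] ZA h_nn PA gam_pos g_pos by (intro divide_nonneg_pos mult_nonneg_nonneg) auto
    then show "\<exists>d. (Z has_real_derivative d) (at x) \<and> d \<ge> - \<delta> * Z x"
      using dZ'[OF T Pp xT] unfolding A_def by (intro exI conjI) auto
  qed (use st0 in auto)
  have Ps: "P s \<ge> P t0 * exp (- (lam + g * BZ * Ch) * (s - t0))"
  proof (rule gronwall_lower2[OF _ cP])
    fix x assume x: "t0 < x" "x < s"
    have g3: "N x > 0" "P x > 0" "Z x > 0" using good[of x] x t0_pos by auto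
    have xr: "x \<in> {t0..s}" using x by auto
    have "f (N x) \<ge> 0" using f_nn g3 by simp
    then have a1: "\<mu> * P x * f (N x) \<ge> 0" using mu_lam lam_pos g3 by simp
    have "P x \<in> {0..BP}" using BP xr g3 by (metis abs_of_pos atLeastAtMost_iff less_imp_le)
    then have hP: "h (P x) \<le> Ch * P x" using Ch by blast
    have hn: "h (P x) \<ge> 0" using h_nn g3 by simp
    have "\<bar>Z x\<bar> \<le> BZ" using BZ xr by blast
    then have ZB: "Z x \<le> BZ" by simp
    have "Z x * h (P x) \<le> BZ * (Ch * P x)"
      using ZB g3 hP hn BZ0 by (intro mult_mono) auto
    then have a2: "g * Z x * h (P x) \<le> g * BZ * Ch * P x" using g_pos
      by (metis mult.assoc mult_le_cancel_left_pos)
    have "\<mu> * P x * f (N x) - lam * P x - g * Z x * h (P x) \<ge> - (lam + g * BZ * Ch) * P x"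
      using a1 a2 by (simp add: algebra_simps)
    then show "\<exists>d. (P has_real_derivative d) (at x) \<and> d \<ge> - (lam + g * BZ * Ch) * P x"
      using dP[of x] x by auto
  qed (use st0 in auto)
  have Ns: "N s \<ge> N t0 * exp (- (\<mu> * BP * Cf) * (s - t0))"
  proof (rule gronwall_lower2[OF _ cN])
    fix x assume x: "t0 < x" "x < s"
    define T where "T = (x + s) / 2"
    have T: "T \<ge> t0" and Pp: "\<forall>u\<in>{0..T}. P u > 0" and xT: "x \<in> {t0<..<T}" using loc[OF x] unfolding T_def by auto
    have g3: "N x > 0" "P x > 0" "Z x > 0" using good[of x] x t0_pos by auto
    have xr: "x \<in> {t0..s}" using x by auto
    have xT': "x \<in> {t0..T}" using xT by auto
    have W0: "W x \<ge> 0" using W_nonneg[OF T Pp xT'] good x by (auto simp: less_imp_le)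
    have cons: "NT - N x - P x - Z x = W x" using CONS[OF T Pp xT'] by simp
    have "N x \<in> {0..BN}" using BN xr g3 by (metis abs_of_pos atLeastAtMost_iff less_imp_le)
    then have fN: "f (N x) \<le> Cf * N x" using Cf by blast
    have fn: "f (N x) \<ge> 0" using f_nn g3 by simp
    have "\<bar>P x\<bar> \<le> BP" using BP xr by blast
    then have PB: "P x \<le> BP" by simp
    have "P x * f (N x) \<le> BP * (Cf * N x)"
      using PB g3 fN fn BP0 by (intro mult_mono) auto
    then have b1: "\<mu> * P x * f (N x) \<le> \<mu> * BP * Cf * N x" using mu_lam lam_pos
      by (metis mult.assoc mult_le_cancel_left_pos less_trans)
    have b2: "lam * P x \<ge> 0" "\<delta> * Z x \<ge> 0" using lam_pos del_pos g3 by auto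
    have b3: "(1 - \<gamma>) * g * Z x * h (P x) \<ge> 0" using gam_le g_pos g3 h_nn by simp
    have b4: "\<delta>0 * (NT - N x - P x - Z x) \<ge> 0" using cons W0 del0 by simp
    have "- \<mu> * P x * f (N x) + lam * P x + \<delta> * Z x + (1 - \<gamma>) * g * Z x * h (P x)
            + \<delta>0 * (NT - N x - P x - Z x) \<ge> - (\<mu> * BP * Cf) * N x"
    proof -
      have e1: "- \<mu> * P x * f (N x) = - (\<mu> * P x * f (N x))" by simp
      have e2: "- (\<mu> * BP * Cf) * N x = - (\<mu> * BP * Cf * N x)" by simp
      show ?thesis unfolding e1 e2 using b1 b2 b3 b4 by linarith
    qed
    then show "\<exists>d. (N has_real_derivative d) (at x) \<and> d \<ge> - (\<mu> * BP * Cf) * N x"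
      using dN[of x] x by auto
  qed (use st0 in auto)
  have "Z t0 > 0" "P t0 > 0" "N t0 > 0" using init_pos[of t0] t0_pos by auto
  then have "Z s > 0" "P s > 0" "N s > 0"
    using Zs Ps Ns by (smt (verit) exp_gt_zero mult_pos_pos)+
  then show False using sB' unfolding B_def by auto
qed

end



context tde begin

lemma NT1_prop: "(THE x. x \<ge> 0 \<and> f x = lam / \<mu>) \<ge> 0 \<and> f (THE x. x \<ge> 0 \<and> f x = lam / \<mu>) = lam / \<mu>"
proof -
  have mu: "\<mu> > 0" using mu_lam lam_pos by simp
  have r: "lam / \<mu> < 1" "lam / \<mu> > 0" using mu_lam lam_pos mu by auto
  have "\<forall>\<^sub>F x in at_top. lam / \<mu> < f x" using order_tendstoD(1)[OF f_lim r(1)] .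
  then obtain X where X: "\<forall>x\<ge>X. lam / \<mu> < f x" unfolding eventually_at_top_linorder by blast
  define y where "y = max X 0"
  have y: "y \<ge> 0" "f y > lam / \<mu>" using X unfolding y_def by auto
  have "continuous_on {0..y} f" using f_cont by (rule continuous_on_subset) auto
  then obtain x where x: "0 \<le> x" "x \<le> y" "f x = lam / \<mu>"
    using IVT'[of f 0 "lam / \<mu>" y] y f0 r by auto
  have "(THE x. x \<ge> 0 \<and> f x = lam / \<mu>) = x"
  proof (rule the_equality)
    show "0 \<le> x \<and> f x = lam / \<mu>" using x by simp
    fix x' assume x': "0 \<le> x' \<and> f x' = lam / \<mu>"
    show "x' = x"
    proof (cases x' x rule: linorder_cases)
      case less then show ?thesis using C1_strict_mono[OF f_C1 f'_pos, of x' x] x x' by simp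
    next
      case greater then show ?thesis using C1_strict_mono[OF f_C1 f'_pos, of x x'] x x' by simp
    qed simp
  qed
  then show ?thesis using x by simp
qed

lemma NP_bound: "t \<ge> t0 \<Longrightarrow> N t + P t < NT"
proof -
  assume t: "t \<ge> t0"
  have Pp: "\<forall>u\<in>{0..t}. P u > 0"
  proof
    fix u assume u: "u \<in> {0..t}"
    show "P u > 0"
    proof (cases "u \<le> t0")
      case True then show ?thesis using init_pos[of u] u by auto
    next
      case False then show ?thesis using pos_all[of u] by auto
    qed
  qed
  have Zn: "\<forall>u\<in>{0..t}. Z u \<ge> 0"
  proof
    fix u assume u: "u \<in> {0..t}"
    show "Z u \<ge> 0"
    proof (cases "u \<le> t0")
      case True then show ?thesis using init_pos[of u] u by auto
    next
      case False then show ?thesis using pos_all[of u] by auto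
    qed
  qed
  have tt: "t \<in> {t0..t}" using t by simp
  have "N t + P t + Z t + W t = NT" using CONS[OF t Pp tt] .
  moreover have "W t \<ge> 0" using W_nonneg[OF t Pp tt Zn] .
  moreover have "Z t > 0" using pos_all[OF t] by simp
  ultimately show ?thesis by simp
qed

lemma main:
  assumes NT1: "NT > (THE x. x \<ge> 0 \<and> f x = lam / \<mu>)"
    and beta: "\<beta> > NT - (THE x. x \<ge> 0 \<and> f x = lam / \<mu>)"
  shows "\<exists>t1\<ge>t0. \<forall>t\<ge>t1. P t < \<beta>"
proof (cases "\<beta> \<ge> NT")
  case True
  have "P t < \<beta>" if "t \<ge> t0" for t
    using NP_bound[OF that] pos_all[OF that] True by simp
  then show ?thesis by blast
next
  case False
  define n1 where "n1 = (THE x. x \<ge> 0 \<and> f x = lam / \<mu>)"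
  have n1: "n1 \<ge> 0" "f n1 = lam / \<mu>" using NT1_prop unfolding n1_def by auto
  define c0 where "c0 = NT - \<beta>"
  have c0: "c0 > 0" "c0 < n1" using False beta unfolding c0_def n1_def by auto
  have mu: "\<mu> > 0" using mu_lam lam_pos by simp
  define q where "q = f c0"
  have "q < lam / \<mu>" using C1_strict_mono[OF f_C1 f'_pos, of c0 n1] c0 n1 unfolding q_def by simp
  then have "\<mu> * q < lam" using mu by (simp add: field_simps)
  define c where "c = lam - \<mu> * q"
  have c: "c > 0" unfolding c_def using \<open>\<mu> * q < lam\<close> by simp
  have bpos: "\<beta> > 0" using beta NT1 by simp
  have key: "\<mu> * P t * f (N t) - lam * P t - g * Z t * h (P t) \<le> - c * \<beta>"
    if t: "t \<ge> t0" "P t \<ge> \<beta>" for t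
  proof -
    have pa: "N t > 0" "P t > 0" "Z t > 0" using pos_all[OF t(1)] by auto
    have "N t < c0" using NP_bound[OF t(1)] t(2) unfolding c0_def by simp
    then have "f (N t) \<le> q" unfolding q_def using C1_mono[OF f_C1, of "N t" c0] f'_pos pa
      by (simp add: less_imp_le)
    then have "P t * f (N t) \<le> P t * q" using pa by (simp add: mult_left_mono)
    then have 1: "\<mu> * P t * f (N t) \<le> \<mu> * q * P t" using mu
      by (metis mult.assoc mult.commute mult_le_cancel_left_pos)
    have 2: "g * Z t * h (P t) \<ge> 0" using g_pos pa h_nn by simp
    have "\<mu> * P t * f (N t) - lam * P t - g * Z t * h (P t) \<le> - c * P t"
      using 1 2 unfolding c_def by (simp add: algebra_simps)
    also have "\<dots> \<le> - c * \<beta>" using c t(2) by simp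
    finally show ?thesis .
  qed
  have A: "\<exists>t1\<ge>t0. P t1 < \<beta>"
  proof (rule ccontr)
    assume "\<not> (\<exists>t1\<ge>t0. P t1 < \<beta>)"
    then have all: "\<forall>t\<ge>t0. P t \<ge> \<beta>" by (simp add: not_less)
    define L where "L = t0 + P t0 / (c * \<beta>) + 1"
    have Lt: "L \<ge> t0" unfolding L_def using pos_all[of t0] c bpos by simp
    have "(\<lambda>s. - (P s + c * \<beta> * s)) t0 \<le> (\<lambda>s. - (P s + c * \<beta> * s)) L"
    proof (rule DERIV_nonneg_imp_increasing_open[OF Lt])
      fix x assume x: "t0 < x" "x < L"
      have "DERIV (\<lambda>s. - (P s + c * \<beta> * s)) x :>
          - ((\<mu> * P x * f (N x) - lam * P x - g * Z x * h (P x)) + c * \<beta>)"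
        using dP[of x] x by (auto intro!: derivative_eq_intros)
      moreover have "- ((\<mu> * P x * f (N x) - lam * P x - g * Z x * h (P x)) + c * \<beta>) \<ge> 0"
        using key[of x] all x by simp
      ultimately show "\<exists>y. DERIV (\<lambda>s. - (P s + c * \<beta> * s)) x :> y \<and> 0 \<le> y" by blast
    next
      have "continuous_on {t0..L} P" using NPZ_cont(2) by (rule continuous_on_subset) (use t0_pos in auto)
      then show "continuous_on {t0..L} (\<lambda>s. - (P s + c * \<beta> * s))" by (intro continuous_intros)
    qed
    then have "P L \<le> P t0 - c * \<beta> * (L - t0)" by (simp add: algebra_simps)
    also have "c * \<beta> * (L - t0) = P t0 + c * \<beta>" unfolding L_def using c bpos by (simp add: field_simps)
    finally have "P L \<le> - c * \<beta>" by simp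
    moreover have "c * \<beta> > 0" using c bpos by simp
    ultimately have "P L < 0" by simp
    then show False using pos_all[OF Lt] by simp
  qed
  then obtain t1 where t1: "t1 \<ge> t0" "P t1 < \<beta>" by blast
  have "P t2 < \<beta>" if t2: "t2 \<ge> t1" for t2
  proof (rule ccontr)
    assume "\<not> P t2 < \<beta>"
    then have bt2: "P t2 \<ge> \<beta>" by simp
    have sub: "{t1..t2} \<subseteq> {0..}" using t1 t0_pos by auto
    have cP: "continuous_on {t1..t2} P" using NPZ_cont(2) continuous_on_subset[OF _ sub] by blast
    define C where "C = {x \<in> {t1..t2}. \<beta> \<le> P x}"
    have "closed C" unfolding C_def by (rule continuous_on_closed_Collect_le[OF continuous_on_const cP closed_atLeastAtMost])
    moreover have "t2 \<in> C" using t2 bt2 unfolding C_def by auto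
    moreover have Csub: "C \<subseteq> {t1..t2}" unfolding C_def by auto
    moreover have bb: "bdd_below C" unfolding bdd_below_def using Csub by (intro exI[of _ t1]) auto
    ultimately have sC: "Inf C \<in> C" using closed_contains_Inf by blast
    define s where "s = Inf C"
    have sC': "s \<in> C" using sC unfolding s_def .
    have srng: "s \<in> {t1..t2}" "P s \<ge> \<beta>" using sC' unfolding C_def by auto
    have below: "P x < \<beta>" if "x \<in> {t1..<s}" for x
    proof -
      have "x \<notin> C" using that cInf_lower[OF _ bb, of x] unfolding s_def by auto
      then show ?thesis using that srng unfolding C_def by auto
    qed
    have st1: "s > t1" using srng t1 by (cases "s = t1") auto
    have st0: "s > t0" using st1 t1 by simp
    have "(\<mu> * P s * f (N s) - lam * P s - g * Z s * h (P s)) \<le> - c * \<beta>"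
      using key[of s] st0 srng by simp
    moreover have "c * \<beta> > 0" using c bpos by simp
    ultimately have neg: "(\<mu> * P s * f (N s) - lam * P s - g * Z s * h (P s)) < 0" by simp
    obtain d where d: "d > 0" "\<forall>h>0. h < d \<longrightarrow> P s < P (s - h)"
      using DERIV_neg_dec_left[OF dP[OF st0] neg] by blast
    define hh where "hh = min (d / 2) ((s - t1) / 2)"
    have h1: "hh \<le> (s - t1) / 2" unfolding hh_def by (rule min.cobounded2)
    have hh: "hh > 0" "hh < d" using d st1 unfolding hh_def by auto
    then have hh3: "s - hh \<in> {t1..<s}" using h1 st1 by auto
    have "P s < P (s - hh)" using d hh by blast
    moreover have "P (s - hh) < \<beta>" using below hh3 by blast
    ultimately show False using srng by simp
  qed
  then show ?thesis using t1 by blast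
qed

end

theorem lemma2:
  fixes \<mu> lam g \<gamma> \<delta> \<delta>0 m NT t0 :: real
    and f f' h h' R R' \<phi>1 \<phi>2 \<phi>3 N P Z :: "real \<Rightarrow> real"
  assumes "\<mu> > lam" "lam > 0" "g > 0" "0 < \<gamma>" "\<gamma> \<le> 1" "\<delta> > 0" "\<gamma> * g > \<delta>"
    "\<delta>0 \<ge> 0" "m > 0" "NT > 0"
    and "C1_nonneg f f'" "\<forall>x\<ge>0. f x \<ge> 0" "f 0 = 0" "\<forall>x\<ge>0. f' x > 0"
        "(f \<longlongrightarrow> 1) at_top"
    and "C1_nonneg h h'" "\<forall>x\<ge>0. h x \<ge> 0" "h 0 = 0" "\<forall>x\<ge>0. h' x > 0"
        "(h \<longlongrightarrow> 1) at_top"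
    and "C1_nonneg R R'" "\<forall>x\<ge>0. R x \<ge> 0" "\<forall>x\<ge>0. R' x \<ge> 0"
        "R 0 = 0 \<longrightarrow> R' 0 > 0" "\<exists>Rinf. (R \<longlongrightarrow> Rinf) at_top"
    and "D_NT R h \<gamma> g \<delta>0 m NT t0 \<phi>1 \<phi>2 \<phi>3"
    and "TDE_solution \<mu> lam g \<gamma> \<delta> \<delta>0 m NT t0 f h R \<phi>1 \<phi>2 \<phi>3 N P Z"
    and "NT > (THE x. x \<ge> 0 \<and> f x = lam / \<mu>)"
  shows "\<forall>\<beta>. \<beta> > NT - (THE x. x \<ge> 0 \<and> f x = lam / \<mu>) \<longrightarrow>
           (\<exists>t1\<ge>t0. \<forall>t\<ge>t1. P t < \<beta>)"
proof -
  have L: "tde \<mu> lam g \<gamma> \<delta> \<delta>0 m NT t0 f f' h h' R R' \<phi>1 \<phi>2 \<phi>3 N P Z"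
    unfolding tde_def using assms by blast
  show ?thesis using tde.main[OF L assms(28)] by blast
qed

end
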